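(* Let $K=3$ and let $l\ge m>0$ be integers. Then \[ h(l,\,m,\,0)\ \le\ h(l-1,\,m-1,\,0)+2. \]
   Context: For a vector $\vec n=(n_1,n_2,n_3)$ of nonnegative integers, the following random process is run: stocks start at $\vec n^{(0)}=\vec n$; at each step $t=1,2,\dots$, as long as at least two coordinates of $\vec n^{(t-1)}$ are nonzero, an index $i$ is chosen uniformly at random (independently of the past) among the indices with $n_i^{(t-1)}>0$, and $\vec n^{(t)}=\vec n^{(t-1)}-\vec e_i$ ($\vec e_i$ the $i$-th standard unit vector). The process stops at the first time $T$ at which at most one coordinate is nonzero, and $h(\vec n)=\mathbb{E}[T]$. Equivalently, with $\operatorname{support}(\vec n)=\{i:n_i\ne 0\}$: $h(\vec n)=0$ if $|\operatorname{support}(\vec n)|\le1$, and otherwise $h(\vec n)=1+\frac{1}{|\operatorname{support}(\vec n)|}\sum_{i\in\operatorname{support}(\vec n)}h(\vec n-\vec e_i)$. *)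

theory Defs
  imports Complex_Main
begin

text \<open>Expected stopping time h of the random depletion process for K = 3 stocks.
  A stock vector is a triple (n1, n2, n3) of naturals; the support is the set of
  indices i in {1,2,3} with n_i nonzero.\<close>

definition supp3 :: "nat \<times> nat \<times> nat \<Rightarrow> nat set" where
  "supp3 v = (case v of (a, b, c) \<Rightarrow>
      {i. (i = 1 \<and> a \<noteq> 0) \<or> (i = 2 \<and> b \<noteq> 0) \<or> (i = 3 \<and> c \<noteq> 0)})"

definition dec3 :: "nat \<times> nat \<times> nat \<Rightarrow> nat \<Rightarrow> nat \<times> nat \<times> nat" where
  "dec3 v i = (case v of (a, b, c) \<Rightarrow>
      (if i = 1 then (a - 1, b, c) else if i = 2 then (a, b - 1, c) else (a, b, c - 1)))"

function h :: "nat \<times> nat \<times> nat \<Rightarrow> real" where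
  "h v = (if card (supp3 v) \<le> 1 then 0
          else 1 + (1 / real (card (supp3 v))) * (\<Sum>i\<in>supp3 v. h (dec3 v i)))"
  by auto
termination
proof (relation "measure (\<lambda>(a, b, c). a + b + c)")
  show "wf (measure (\<lambda>(a, b, c). a + b + c))" by simp
next
  fix v :: "nat \<times> nat \<times> nat" and i
  assume "\<not> card (supp3 v) \<le> 1" "i \<in> supp3 v"
  then show "(dec3 v i, v) \<in> measure (\<lambda>(a, b, c). a + b + c)"
    by (cases v) (auto simp: supp3_def dec3_def)
qed

end

theory Submission
  imports Defs
begin

declare h.simps[simp del]

lemma hrec: "h (a, b, 0) = (if a = 0 \<or> b = 0 then 0
   else 1 + (h (a - 1, b, 0) + h (a, b - 1, 0)) / 2)"
proof (cases "a = 0 \<or> b = 0")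
  case True
  then have "card (supp3 (a, b, 0)) \<le> 1"
  proof
    assume "a = 0"
    then have "supp3 (a, b, 0) \<subseteq> {2}" by (auto simp: supp3_def)
    then show ?thesis using card_mono[OF finite.insertI[OF finite.emptyI]] by fastforce
  next
    assume "b = 0"
    then have "supp3 (a, b, 0) \<subseteq> {1}" by (auto simp: supp3_def)
    then show ?thesis using card_mono[OF finite.insertI[OF finite.emptyI]] by fastforce
  qed
  then show ?thesis using True by (subst h.simps) simp
next
  case False
  then have s: "supp3 (a, b, 0) = {1, 2}" by (auto simp: supp3_def)
  show ?thesis using False by (subst h.simps) (simp add: s dec3_def)
qed

lemma hrec0: "h (0, b, 0) = 0" by (subst hrec) simp
lemma hrecb0: "h (a, 0, 0) = 0" by (subst hrec) simp

lemma h1: "h (1, b, 0) \<le> 2"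
proof (induction b)
  case 0 then show ?case by (simp add: hrecb0)
next
  case (Suc b) then show ?case by (subst hrec) (simp add: hrec0)
qed

lemma h1': "h (a, 1, 0) \<le> 2"
proof (induction a)
  case 0 then show ?case by (simp add: hrec0)
next
  case (Suc a) then show ?case by (subst hrec) (simp add: hrecb0)
qed

lemma main: "a > 0 \<Longrightarrow> b > 0 \<Longrightarrow> h (a, b, 0) \<le> h (a - 1, b - 1, 0) + 2"
proof (induction "a + b" arbitrary: a b rule: less_induct)
  case less
  show ?case
  proof (cases "a = 1 \<or> b = 1")
    case True
    then show ?thesis using h1[of b] h1'[of a] by (auto simp: hrec0 hrecb0)
  next
    case False
    then have a2: "a \<ge> 2" and b2: "b \<ge> 2" using less.prems by auto
    have i1: "h (a - 1, b, 0) \<le> h (a - 1 - 1, b - 1, 0) + 2"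
      using less.hyps[of "a - 1" b] a2 b2 by auto
    have i2: "h (a, b - 1, 0) \<le> h (a - 1, b - 1 - 1, 0) + 2"
      using less.hyps[of a "b - 1"] a2 b2 by auto
    have e1: "h (a, b, 0) = 1 + (h (a - 1, b, 0) + h (a, b - 1, 0)) / 2"
      using a2 b2 by (subst hrec) simp
    have e2: "h (a - 1, b - 1, 0) = 1 + (h (a - 1 - 1, b - 1, 0) + h (a - 1, b - 1 - 1, 0)) / 2"
      using a2 b2 by (subst hrec) simp
    show ?thesis unfolding e1 e2 using i1 i2 by argo
  qed
qed

theorem lemma7:
  fixes l m :: nat
  assumes "l \<ge> m" and "m > 0"
  shows "h (l, m, 0) \<le> h (l - 1, m - 1, 0) + 2"
  using main assms by simp

end
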